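(* Let $P$ be a finite poset and $q$ a positive integer. For every $f\in\mathrm{Inc}^q(P)$, $\mathrm{IncPro}(f)=\mathrm{JdtPro}(f)$.
   Context: $\mathrm{Inc}^q(P)$ is the set of $f:P\to\{1,\dots,q\}$ with $p_1<p_2\Rightarrow f(p_1)<f(p_2)$. For $1\le i\le q-1$, $\rho_i(f)(x)=i+1$ if $f(x)=i$ and changing only the value at $x$ to $i+1$ yields an element of $\mathrm{Inc}^q(P)$; $\rho_i(f)(x)=i$ if $f(x)=i+1$ and changing only the value at $x$ to $i$ yields an element of $\mathrm{Inc}^q(P)$; $\rho_i(f)(x)=f(x)$ otherwise. $\mathrm{IncPro}=\rho_{q-1}\circ\cdots\circ\rho_1$. Jeu de taquin promotion: consider labelings $g:P\to\mathbb{Z}\cup\{\square\}$. The slide $\sigma_i$ is defined (simultaneously at all $x$, using the values of $g$) by $\sigma_i(g)(x)=i$ if $g(x)=\square$ and $g(y)=i$ for some $y\gtrdot x$; $\sigma_i(g)(x)=\square$ if $g(x)=i$ and $g(z)=\square$ for some $z\lessdot x$; $\sigma_i(g)(x)=g(x)$ otherwise. $\sigma_{a\to b}$ replaces every label $a$ by $b$. Set $jdt(f)=\sigma_{\square\to q+1}\circ\sigma_q\circ\sigma_{q-1}\circ\cdots\circ\sigma_2\circ\sigma_{1\to\square}(f)$ and $\mathrm{JdtPro}(f)(x)=jdt(f)(x)-1$. *)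

theory Defs
  imports Main
begin

definition covers :: "'a::order \<Rightarrow> 'a \<Rightarrow> bool" where
  "covers x y \<longleftrightarrow> x < y \<and> \<not> (\<exists>z. x < z \<and> z < y)"
  \<comment> \<open>covers x y means y covers x\<close>

definition Inc :: "nat \<Rightarrow> ('a::order \<Rightarrow> int) set" where
  "Inc q = {f. (\<forall>x. 1 \<le> f x \<and> f x \<le> int q) \<and> (\<forall>x y. x < y \<longrightarrow> f x < f y)}"

definition rho :: "nat \<Rightarrow> int \<Rightarrow> ('a::order \<Rightarrow> int) \<Rightarrow> ('a \<Rightarrow> int)" where
  "rho q i f = (\<lambda>x.
     if f x = i \<and> f(x := i + 1) \<in> Inc q then i + 1
     else if f x = i + 1 \<and> f(x := i) \<in> Inc q then i
     else f x)"

definition IncPro :: "nat \<Rightarrow> ('a::order \<Rightarrow> int) \<Rightarrow> ('a \<Rightarrow> int)" where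
  "IncPro q f = fold (rho q) [1..int q - 1] f"

text \<open>Labelings with values in Z \<union> {box}; None plays the role of the box.\<close>
definition sigma :: "int \<Rightarrow> ('a::order \<Rightarrow> int option) \<Rightarrow> ('a \<Rightarrow> int option)" where
  "sigma i g = (\<lambda>x.
     if g x = None \<and> (\<exists>y. covers x y \<and> g y = Some i) then Some i
     else if g x = Some i \<and> (\<exists>z. covers z x \<and> g z = None) then None
     else g x)"

definition relabel :: "int option \<Rightarrow> int option \<Rightarrow> ('a \<Rightarrow> int option) \<Rightarrow> ('a \<Rightarrow> int option)" where
  "relabel a b g = (\<lambda>x. if g x = a then b else g x)"

text \<open>jdt = sigma_{box->q+1} o sigma_q o ... o sigma_2 o sigma_{1->box}.\<close>
definition jdt :: "nat \<Rightarrow> ('a::order \<Rightarrow> int) \<Rightarrow> ('a \<Rightarrow> int option)" where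
  "jdt q f = relabel None (Some (int q + 1))
              (fold sigma [2..int q] (relabel (Some 1) None (\<lambda>x. Some (f x))))"

definition JdtPro :: "nat \<Rightarrow> ('a::order \<Rightarrow> int) \<Rightarrow> ('a \<Rightarrow> int)" where
  "JdtPro q f = (\<lambda>x. the (jdt q f x) - 1)"

end

theory Submission
  imports Defs
begin

lemma up_cover:
  fixes x y :: "'a::{finite,order}"
  assumes "x < y"
  shows "\<exists>z. covers x z \<and> z \<le> y"
proof -
  let ?A = "{z. x < z \<and> z \<le> y}"
  have "finite ?A" by simp
  moreover have "?A \<noteq> {}" using assms by auto
  ultimately obtain m where m: "m \<in> ?A" "\<forall>b\<in>?A. b \<le> m \<longrightarrow> m = b"
    using finite_has_minimal by blast
  have "covers x m"
    unfolding covers_def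
  proof (intro conjI notI)
    show "x < m" using m by simp
  next
    assume "\<exists>z. x < z \<and> z < m"
    then obtain z where "x < z" "z < m" by blast
    with m show False by (metis (mono_tags, lifting) less_le_not_le mem_Collect_eq order.trans)
  qed
  thus ?thesis using m by auto
qed

lemma down_cover:
  fixes x y :: "'a::{finite,order}"
  assumes "y < x"
  shows "\<exists>z. covers z x \<and> y \<le> z"
proof -
  let ?A = "{z. z < x \<and> y \<le> z}"
  have "finite ?A" by simp
  moreover have "?A \<noteq> {}" using assms by auto
  ultimately obtain m where m: "m \<in> ?A" "\<forall>b\<in>?A. m \<le> b \<longrightarrow> m = b"
    using finite_has_maximal by blast
  have "covers m x"
    unfolding covers_def
  proof (intro conjI notI)
    show "m < x" using m by simp
  next
    assume "\<exists>z. m < z \<and> z < x"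
    then obtain z where "m < z" "z < x" by blast
    with m show False by (metis (mono_tags, lifting) less_le_not_le mem_Collect_eq order.trans)
  qed
  thus ?thesis using m by auto
qed

lemma raise_iff:
  fixes h :: "'a::{finite,order} \<Rightarrow> int"
  assumes h: "h \<in> Inc q" and hx: "h x = k" and k: "1 \<le> k" "k + 1 \<le> int q"
  shows "h(x := k+1) \<in> Inc q \<longleftrightarrow> \<not> (\<exists>y. covers x y \<and> h y = k+1)"
proof
  assume A: "h(x := k+1) \<in> Inc q"
  show "\<not> (\<exists>y. covers x y \<and> h y = k+1)"
  proof
    assume "\<exists>y. covers x y \<and> h y = k+1"
    then obtain y where y: "x < y" "h y = k+1" by (auto simp: covers_def)
    have "(h(x:=k+1)) x < (h(x:=k+1)) y" using A y(1) unfolding Inc_def by blast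
    then show False using y by (auto split: if_splits)
  qed
next
  assume N: "\<not> (\<exists>y. covers x y \<and> h y = k+1)"
  have hb: "\<And>z. 1 \<le> h z \<and> h z \<le> int q" and hm: "\<And>a b. a < b \<Longrightarrow> h a < h b"
    using h unfolding Inc_def by auto
  show "h(x := k+1) \<in> Inc q"
    unfolding Inc_def
  proof (intro CollectI conjI allI impI)
    fix z show "1 \<le> (h(x := k + 1)) z" "(h(x := k + 1)) z \<le> int q"
      using hb[of z] k by auto
  next
    fix a b :: 'a assume ab: "a < b"
    show "(h(x := k + 1)) a < (h(x := k + 1)) b"
    proof (cases "a = x")
      case True
      then have bx: "b \<noteq> x" using ab by auto
      have "h b > k" using hm[OF ab] True hx by simp
      moreover have "h b \<noteq> k+1"
      proof
        assume hbk: "h b = k+1"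
        obtain z where z: "covers x z" "z \<le> b" using up_cover ab True by blast
        have "h z > k" using hm[of x z] z(1) hx unfolding covers_def by simp
        moreover have "h z \<le> k+1" using z(2) hm[of z b] hbk by (cases "z = b") (auto simp: order.order_iff_strict)
        ultimately show False using N z by auto
      qed
      ultimately show ?thesis using True bx by auto
    next
      case False
      show ?thesis
      proof (cases "b = x")
        case True
        then show ?thesis using False hm[OF ab] hx by auto
      next
        case False2: False
        then show ?thesis using False hm[OF ab] by auto
      qed
    qed
  qed
qed

lemma lower_iff:
  fixes h :: "'a::{finite,order} \<Rightarrow> int"
  assumes h: "h \<in> Inc q" and hx: "h x = k+1" and k: "1 \<le> k" "k + 1 \<le> int q"
  shows "h(x := k) \<in> Inc q \<longleftrightarrow> \<not> (\<exists>z. covers z x \<and> h z = k)"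
proof
  assume A: "h(x := k) \<in> Inc q"
  show "\<not> (\<exists>z. covers z x \<and> h z = k)"
  proof
    assume "\<exists>z. covers z x \<and> h z = k"
    then obtain z where z: "z < x" "h z = k" by (auto simp: covers_def)
    have "(h(x:=k)) z < (h(x:=k)) x" using A z(1) unfolding Inc_def by blast
    then show False using z by (auto split: if_splits)
  qed
next
  assume N: "\<not> (\<exists>z. covers z x \<and> h z = k)"
  have hb: "\<And>z. 1 \<le> h z \<and> h z \<le> int q" and hm: "\<And>a b. a < b \<Longrightarrow> h a < h b"
    using h unfolding Inc_def by auto
  show "h(x := k) \<in> Inc q"
    unfolding Inc_def
  proof (intro CollectI conjI allI impI)
    fix z show "1 \<le> (h(x := k)) z" "(h(x := k)) z \<le> int q"
      using hb[of z] k by auto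
  next
    fix a b :: 'a assume ab: "a < b"
    show "(h(x := k)) a < (h(x := k)) b"
    proof (cases "b = x")
      case True
      then have ax: "a \<noteq> x" using ab by auto
      have "h a < k + 1" using hm[OF ab] True hx by simp
      moreover have "h a \<noteq> k"
      proof
        assume hak: "h a = k"
        obtain z where z: "covers z x" "a \<le> z" using down_cover ab True by blast
        have "h z < k+1" using hm[of z x] z(1) hx unfolding covers_def by simp
        moreover have "h z \<ge> k" using z(2) hm[of a z] hak by (cases "a = z") (auto simp: order.order_iff_strict)
        ultimately show False using N z by auto
      qed
      ultimately show ?thesis using True ax by auto
    next
      case False
      show ?thesis
      proof (cases "a = x")
        case True
        then show ?thesis using False hm[OF ab] hx by auto
      next
        case False2: False
        then show ?thesis using False hm[OF ab] by auto
      qed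
    qed
  qed
qed

lemma rho_Inc:
  fixes h :: "'a::{finite,order} \<Rightarrow> int"
  assumes h: "h \<in> Inc q" and k: "1 \<le> k" "k + 1 \<le> int q"
  shows "rho q k h \<in> Inc q"
proof -
  have hb: "\<And>z. 1 \<le> h z \<and> h z \<le> int q" and hm: "\<And>a b. a < b \<Longrightarrow> h a < h b"
    using h unfolding Inc_def by auto
  show ?thesis
    unfolding Inc_def
  proof (intro CollectI conjI allI impI)
    fix z show "1 \<le> rho q k h z" "rho q k h z \<le> int q"
      using hb[of z] k by (auto simp: rho_def)
  next
    fix a b :: 'a assume ab: "a < b"
    have R: "h a = k \<and> h(a := k+1) \<in> Inc q \<Longrightarrow> k+1 < h b"
    proof -
      assume "h a = k \<and> h(a := k+1) \<in> Inc q"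
      then have "(h(a := k+1)) a < (h(a := k+1)) b" unfolding Inc_def using ab by blast
      then show ?thesis using ab by (auto split: if_splits)
    qed
    have L: "h b = k+1 \<and> h(b := k) \<in> Inc q \<Longrightarrow> h a < k"
    proof -
      assume "h b = k+1 \<and> h(b := k) \<in> Inc q"
      then have "(h(b := k)) a < (h(b := k)) b" unfolding Inc_def using ab by blast
      then show ?thesis using ab by (auto split: if_splits)
    qed
    show "rho q k h a < rho q k h b"
      using R L hm[OF ab] unfolding rho_def by (auto split: if_splits)
  qed
qed

definition enc :: "int \<Rightarrow> ('a \<Rightarrow> int) \<Rightarrow> ('a \<Rightarrow> int option)" where
  "enc k h = (\<lambda>x. if h x = k then None else if h x < k then Some (h x + 1) else Some (h x))"

lemma enc_some: "enc k h y = Some (k+1) \<longleftrightarrow> h y = k+1"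
  by (auto simp: enc_def)

lemma enc_none: "enc k h y = None \<longleftrightarrow> h y = k"
  by (auto simp: enc_def)

lemma sigma_step:
  fixes h :: "'a::{finite,order} \<Rightarrow> int"
  assumes h: "h \<in> Inc q" and k: "1 \<le> k" "k + 1 \<le> int q"
  shows "sigma (k+1) (enc k h) = enc (k+1) (rho q k h)"
proof
  fix x
  have E1: "(\<exists>y. covers x y \<and> enc k h y = Some (k+1)) \<longleftrightarrow> (\<exists>y. covers x y \<and> h y = k+1)"
    by (simp add: enc_some)
  have E2: "(\<exists>z. covers z x \<and> enc k h z = None) \<longleftrightarrow> (\<exists>z. covers z x \<and> h z = k)"
    by (simp add: enc_none)
  show "sigma (k+1) (enc k h) x = enc (k+1) (rho q k h) x"
  proof (cases "h x = k")
    case True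
    then show ?thesis using raise_iff[OF h True k] E1
      by (auto simp: sigma_def rho_def enc_def)
  next
    case F1: False
    show ?thesis
    proof (cases "h x = k+1")
      case True
      then show ?thesis using lower_iff[OF h True k] E2 F1
        by (auto simp: sigma_def rho_def enc_def)
    next
      case False
      then show ?thesis using F1 by (auto simp: sigma_def rho_def enc_def)
    qed
  qed
qed

lemma fold_main:
  fixes h :: "'a::{finite,order} \<Rightarrow> int"
  shows "h \<in> Inc q \<Longrightarrow> 1 \<le> m \<Longrightarrow> m \<le> int q \<Longrightarrow> n = nat (int q - m) \<Longrightarrow>
    fold sigma [m+1..int q] (enc m h) = enc (int q) (fold (rho q) [m..int q - 1] h)
    \<and> fold (rho q) [m..int q - 1] h \<in> Inc q"
proof (induction n arbitrary: m h)
  case 0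
  then have "m = int q" by simp
  then show ?case using 0 by simp
next
  case (Suc n)
  then have mq: "m + 1 \<le> int q" by simp
  have e1: "[m+1..int q] = (m+1) # [m+2..int q]" using mq upto_rec1 by (simp add: add.commute)
  have e2: "[m..int q - 1] = m # [m+1..int q - 1]" using mq upto_rec1 by simp
  have hi: "rho q m h \<in> Inc q" using rho_Inc Suc.prems mq by blast
  have IH: "fold sigma [m+1+1..int q] (enc (m+1) (rho q m h)) = enc (int q) (fold (rho q) [m+1..int q - 1] (rho q m h))
    \<and> fold (rho q) [m+1..int q - 1] (rho q m h) \<in> Inc q"
    using Suc.IH[OF hi, of "m+1"] Suc.prems mq by simp
  have "fold sigma [m+1..int q] (enc m h) = fold sigma [m+2..int q] (sigma (m+1) (enc m h))"
    using e1 by simp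
  also have "\<dots> = fold sigma [m+2..int q] (enc (m+1) (rho q m h))"
    using sigma_step Suc.prems mq by metis
  finally show ?case using IH e2 by (simp add: add.assoc)
qed

theorem theorem3p8:
  fixes f :: "'a::{finite,order} \<Rightarrow> int" and q :: nat
  assumes "q \<ge> 1" and "f \<in> Inc q"
  shows "IncPro q f = JdtPro q f"
proof -
  have fb: "\<And>z. 1 \<le> f z \<and> f z \<le> int q" using assms(2) unfolding Inc_def by auto
  have start: "relabel (Some 1) None (\<lambda>x. Some (f x)) = enc 1 f"
  proof
    fix x show "relabel (Some 1) None (\<lambda>x. Some (f x)) x = enc 1 f x"
      using fb[of x] by (auto simp: relabel_def enc_def)
  qed
  have M: "fold sigma [2..int q] (enc 1 f) = enc (int q) (IncPro q f) \<and> IncPro q f \<in> Inc q"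
    using fold_main[OF assms(2), of 1 "nat (int q - 1)"] assms(1) by (simp add: IncPro_def)
  then have ib: "\<And>z. 1 \<le> IncPro q f z \<and> IncPro q f z \<le> int q" unfolding Inc_def by auto
  show ?thesis
  proof
    fix x
    show "IncPro q f x = JdtPro q f x"
      using ib[of x] M unfolding JdtPro_def jdt_def start
      by (auto simp: relabel_def enc_def)
  qed
qed

end
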